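(* Let $R$ be a finite commutative ring, $K\le R^\times$, and $\mathcal A=\mathcal A(K,R)$ the multiplication S-ring of $\mathrm{Cyc}(K,R)$. Then $\mathcal S^*(\mathcal A)$ contains the sets $rK$ for all $r\in R^\times$ and the sets $(1+rK)\cap R^\times$ for all $r\in R$.
   Context: All rings have an identity. A scheme on a finite set $V$ is a pair $(V,\mathcal R)$, $\mathcal R$ a partition of $V\times V$ into nonempty basis relations, closed under transposition, with the diagonal a union of basis relations and with the intersection numbers $|\{y:(x,y)\in R_1,(y,z)\in R_2\}|$ depending only on the basis relation containing $(x,z)$; relations are unions of basis relations. For a set $\mathcal M$ of relations, $[\mathcal C,\mathcal M]$ is the smallest scheme on $V$ having all relations of $\mathcal C$ and of $\mathcal M$ as relations; $\mathcal C_w=[\mathcal C,\{(w,w)\}]$. If $\Delta(U)$ is a relation, the restriction $\mathcal C_U$ is the scheme on $U$ with basis relations the nonempty $S\cap U^2$. $\mathrm{Iso}(\mathcal C)$ is the group of permutations of $V$ permuting the basis relations; for $\Gamma\le\mathrm{Iso}(\mathcal C)$, $\mathcal C^\Gamma$ is the scheme whose relations are the $\Gamma$-invariant relations of $\mathcal C$. For $K\le R^\times$, $\mathcal C=\mathrm{Cyc}(K,R)$ is the scheme on $R$ with basis relations $\{(x,y): y-x\in rK\}$, $r\in R$. Put $u=0$; then $\mathcal C'=((\mathcal C_u)_{R^\times})^{R^\times_{right}}$, where $R^\times_{right}=\{x\mapsto xa: a\in R^\times\}$, is a scheme on $R^\times$ whose basis relations are invariant under $R^\times_{right}$, hence each is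 of the form $R(X)=\{(g,xg): g\in R^\times, x\in X\}$ for some $X\subseteq R^\times$. An S-ring over a finite group $G$ is a subring of $\mathbb Z[G]$ with $\mathbb Z$-basis $\{\sum_{x\in X}x: X\in\mathcal S\}$ for a partition $\mathcal S$ of $G$ with $\{1\}\in\mathcal S$ and $X\in\mathcal S\Rightarrow X^{-1}\in\mathcal S$; $\mathcal S^*$ denotes the set of unions of members of $\mathcal S$ (basic sets). The multiplication S-ring $\mathcal A(K,R)$ is the S-ring over $R^\times$ whose basic sets are the sets $X$ with $R(X)$ a basis relation of $\mathcal C'$. *)

theory Defs
  imports Main
begin

definition is_scheme :: "'a set \<Rightarrow> ('a \<times> 'a) set set \<Rightarrow> bool" where
  "is_scheme V S \<longleftrightarrow>
     finite V \<and>
     (\<forall>s\<in>S. s \<noteq> {}) \<and>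
     \<Union>S = V \<times> V \<and>
     (\<forall>s\<in>S. \<forall>t\<in>S. s \<noteq> t \<longrightarrow> s \<inter> t = {}) \<and>
     (\<forall>s\<in>S. s\<inverse> \<in> S) \<and>
     (\<exists>T\<subseteq>S. \<Union>T = Id_on V) \<and>
     (\<forall>r1\<in>S. \<forall>r2\<in>S. \<forall>s\<in>S. \<forall>x z x' z'. (x, z) \<in> s \<longrightarrow> (x', z') \<in> s \<longrightarrow>
        card {y. (x, y) \<in> r1 \<and> (y, z) \<in> r2} = card {y. (x', y) \<in> r1 \<and> (y, z') \<in> r2})"

definition scheme_relations :: "('a \<times> 'a) set set \<Rightarrow> ('a \<times> 'a) set set" where
  "scheme_relations S = {\<Union>T | T. T \<subseteq> S}"

definition gen_scheme :: "'a set \<Rightarrow> ('a \<times> 'a) set set \<Rightarrow> ('a \<times> 'a) set set \<Rightarrow> ('a \<times> 'a) set set" where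
  "gen_scheme V S M = (THE S'. is_scheme V S' \<and>
      scheme_relations S \<subseteq> scheme_relations S' \<and> M \<subseteq> scheme_relations S' \<and>
      (\<forall>S''. is_scheme V S'' \<and> scheme_relations S \<subseteq> scheme_relations S'' \<and>
              M \<subseteq> scheme_relations S'' \<longrightarrow> scheme_relations S' \<subseteq> scheme_relations S''))"

definition point_ext :: "'a set \<Rightarrow> ('a \<times> 'a) set set \<Rightarrow> 'a \<Rightarrow> ('a \<times> 'a) set set" where
  "point_ext V S w = gen_scheme V S {{(w, w)}}"

definition restrict_scheme :: "'a set \<Rightarrow> ('a \<times> 'a) set set \<Rightarrow> ('a \<times> 'a) set set" where
  "restrict_scheme U S = {s \<inter> (U \<times> U) | s. s \<in> S \<and> s \<inter> (U \<times> U) \<noteq> {}}"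

text \<open>C^\<Gamma>: the scheme whose relations are the \<Gamma>-invariant relations of C; its basis
  relations are the minimal nonempty \<Gamma>-invariant relations of C.\<close>
definition invariant_rel :: "('a \<Rightarrow> 'a) set \<Rightarrow> ('a \<times> 'a) set \<Rightarrow> bool" where
  "invariant_rel \<Gamma> r \<longleftrightarrow> (\<forall>g\<in>\<Gamma>. (\<lambda>(x, y). (g x, g y)) ` r = r)"

definition fixed_scheme :: "('a \<Rightarrow> 'a) set \<Rightarrow> ('a \<times> 'a) set set \<Rightarrow> ('a \<times> 'a) set set" where
  "fixed_scheme \<Gamma> S = {r. r \<in> scheme_relations S \<and> invariant_rel \<Gamma> r \<and> r \<noteq> {} \<and>
      (\<forall>r'. r' \<in> scheme_relations S \<and> invariant_rel \<Gamma> r' \<and> r' \<noteq> {} \<and> r' \<subseteq> r \<longrightarrow> r' = r)}"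

definition units_of_ring :: "'a::comm_ring_1 set" where
  "units_of_ring = {x. x dvd 1}"

definition is_unit_subgroup :: "'a::comm_ring_1 set \<Rightarrow> bool" where
  "is_unit_subgroup K \<longleftrightarrow> K \<subseteq> units_of_ring \<and> 1 \<in> K \<and>
     (\<forall>a\<in>K. \<forall>b\<in>K. a * b \<in> K) \<and> (\<forall>a\<in>K. \<exists>b\<in>K. a * b = 1)"

definition Cyc :: "'a::comm_ring_1 set \<Rightarrow> ('a \<times> 'a) set set" where
  "Cyc K = {{(x, y). y - x \<in> (\<lambda>k. r * k) ` K} | r. True}"

definition Rrel :: "'a::comm_ring_1 set \<Rightarrow> ('a \<times> 'a) set" where
  "Rrel X = {(g, x * g) | g x. g \<in> units_of_ring \<and> x \<in> X}"

definition C_prime :: "'a::{comm_ring_1,finite} set \<Rightarrow> ('a \<times> 'a) set set" where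
  "C_prime K = fixed_scheme ((\<lambda>a. \<lambda>x. x * a) ` units_of_ring)
      (restrict_scheme units_of_ring (point_ext UNIV (Cyc K) 0))"

definition mult_sring_basic :: "'a::{comm_ring_1,finite} set \<Rightarrow> 'a set set" where
  "mult_sring_basic K = {X. X \<subseteq> units_of_ring \<and> Rrel X \<in> C_prime K}"

definition sring_unions :: "'a set set \<Rightarrow> 'a set set" where
  "sring_unions B = {\<Union>T | T. T \<subseteq> B}"

end

theory Submission imports Defs begin

lemma is_schemeD:
  assumes "is_scheme V S"
  shows "finite V" "\<forall>s\<in>S. s \<noteq> {}" "\<Union>S = V \<times> V"
    "\<forall>s\<in>S. \<forall>t\<in>S. s \<noteq> t \<longrightarrow> s \<inter> t = {}" "\<forall>s\<in>S. s\<inverse> \<in> S"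
    "\<exists>T\<subseteq>S. \<Union>T = Id_on V"
    "\<forall>r1\<in>S. \<forall>r2\<in>S. \<forall>s\<in>S. \<forall>x z x' z'. (x, z) \<in> s \<longrightarrow> (x', z') \<in> s \<longrightarrow>
        card {y. (x, y) \<in> r1 \<and> (y, z) \<in> r2} = card {y. (x', y) \<in> r1 \<and> (y, z') \<in> r2}"
  using assms unfolding is_scheme_def apply -
  apply (elim conjE, assumption)+
  done

lemma Id_on_UNIV_eq: "Id_on UNIV = Id"
  by (auto simp: Id_on_iff)

lemma rel_char:
  assumes disj: "\<forall>s\<in>S. \<forall>t\<in>S. s \<noteq> t \<longrightarrow> s \<inter> t = {}" and cov: "\<Union>S = W"
  shows "scheme_relations S = {A. A \<subseteq> W \<and> (\<forall>s\<in>S. s \<subseteq> A \<or> s \<inter> A = {})}"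
proof
  show "scheme_relations S \<subseteq> {A. A \<subseteq> W \<and> (\<forall>s\<in>S. s \<subseteq> A \<or> s \<inter> A = {})}"
  proof
    fix A assume "A \<in> scheme_relations S"
    then obtain T where T: "T \<subseteq> S" "A = \<Union>T" unfolding scheme_relations_def by auto
    have "A \<subseteq> W" using T cov by auto
    moreover have "s \<subseteq> A \<or> s \<inter> A = {}" if s: "s \<in> S" for s
    proof (cases "s \<in> T")
      case True thus ?thesis using T by auto
    next
      case False
      have "s \<inter> t = {}" if "t \<in> T" for t
      proof -
        have "t \<in> S" "s \<noteq> t" using T(1) that False by auto
        thus ?thesis using disj s by blast
      qed
      thus ?thesis using T by auto
    qed
    ultimately show "A \<in> {A. A \<subseteq> W \<and> (\<forall>s\<in>S. s \<subseteq> A \<or> s \<inter> A = {})}" by simp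
  qed
  show "{A. A \<subseteq> W \<and> (\<forall>s\<in>S. s \<subseteq> A \<or> s \<inter> A = {})} \<subseteq> scheme_relations S"
  proof
    fix A assume A: "A \<in> {A. A \<subseteq> W \<and> (\<forall>s\<in>S. s \<subseteq> A \<or> s \<inter> A = {})}"
    have "A \<subseteq> \<Union>{s\<in>S. s \<subseteq> A}"
    proof
      fix p assume p: "p \<in> A"
      then have "p \<in> \<Union>S" using A cov by auto
      then obtain s where "s \<in> S" "p \<in> s" by auto
      thus "p \<in> \<Union>{s\<in>S. s \<subseteq> A}" using A p by auto
    qed
    hence "A = \<Union>{s\<in>S. s \<subseteq> A}" by auto
    thus "A \<in> scheme_relations S" unfolding scheme_relations_def by blast
  qed
qed

lemma scheme_rel:
  assumes "is_scheme UNIV S"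
  shows "scheme_relations S = {A. \<forall>s\<in>S. s \<subseteq> A \<or> s \<inter> A = {}}"
proof -
  have "\<Union>S = UNIV" using is_schemeD(3)[OF assms] by simp
  thus ?thesis using rel_char[of S UNIV, OF is_schemeD(4)[OF assms]] by simp
qed

lemma count_union_const:
  fixes S :: "('a::finite \<times> 'a) set set"
  assumes sch: "is_scheme UNIV S" and TA: "TA \<subseteq> S" and TB: "TB \<subseteq> S" and s: "s \<in> S"
    and p: "(x,z) \<in> s" "(x',z') \<in> s"
  shows "card {y. (x,y) \<in> \<Union>TA \<and> (y,z) \<in> \<Union>TB} = card {y. (x',y) \<in> \<Union>TA \<and> (y,z') \<in> \<Union>TB}"
proof -
  have disj: "\<forall>s\<in>S. \<forall>t\<in>S. s \<noteq> t \<longrightarrow> s \<inter> t = {}" 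
    and coh: "\<forall>r1\<in>S. \<forall>r2\<in>S. \<forall>s\<in>S. \<forall>x z x' z'. (x, z) \<in> s \<longrightarrow> (x', z') \<in> s \<longrightarrow>
        card {y. (x, y) \<in> r1 \<and> (y, z) \<in> r2} = card {y. (x', y) \<in> r1 \<and> (y, z') \<in> r2}"
    using is_schemeD[OF sch] by blast+
  have dec: "\<And>x z. {y. (x,y) \<in> \<Union>TA \<and> (y,z) \<in> \<Union>TB} = (\<Union>ab\<in>TA\<times>TB. {y. (x,y) \<in> fst ab \<and> (y,z) \<in> snd ab})" by auto
  have cardeq: "card {y. (x,y) \<in> \<Union>TA \<and> (y,z) \<in> \<Union>TB} = (\<Sum>ab\<in>TA\<times>TB. card {y. (x,y) \<in> fst ab \<and> (y,z) \<in> snd ab})"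
    for x z
    unfolding dec
  proof (rule card_UN_disjoint)
    show "finite (TA \<times> TB)" by simp
    show "\<forall>i\<in>TA \<times> TB. finite {y. (x, y) \<in> fst i \<and> (y, z) \<in> snd i}" by simp
    show "\<forall>i\<in>TA \<times> TB. \<forall>j\<in>TA \<times> TB. i \<noteq> j \<longrightarrow>
        {y. (x, y) \<in> fst i \<and> (y, z) \<in> snd i} \<inter> {y. (x, y) \<in> fst j \<and> (y, z) \<in> snd j} = {}"
    proof (intro ballI impI)
      fix i j assume i: "i \<in> TA \<times> TB" and j: "j \<in> TA \<times> TB" and ne: "i \<noteq> j"
      show "{y. (x, y) \<in> fst i \<and> (y, z) \<in> snd i} \<inter> {y. (x, y) \<in> fst j \<and> (y, z) \<in> snd j} = {}"
      proof (rule ccontr)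
        assume "\<not> ?thesis"
        then obtain y where y: "(x, y) \<in> fst i" "(y, z) \<in> snd i" "(x, y) \<in> fst j" "(y, z) \<in> snd j" by blast
        have m: "fst i \<in> S" "fst j \<in> S" "snd i \<in> S" "snd j \<in> S" using i j TA TB by auto
        have "fst i \<inter> fst j \<noteq> {}" using y by blast
        hence "fst i = fst j" using disj m by blast
        moreover have "snd i \<inter> snd j \<noteq> {}" using y by blast
        hence "snd i = snd j" using disj m by blast
        ultimately show False using ne by (simp add: prod_eq_iff)
      qed
    qed
  qed
  show ?thesis unfolding cardeq
  proof (rule sum.cong)
    fix ab assume "ab \<in> TA \<times> TB"
    hence m: "fst ab \<in> S" "snd ab \<in> S" using TA TB by auto
    show "card {y. (x, y) \<in> fst ab \<and> (y, z) \<in> snd ab} = card {y. (x', y) \<in> fst ab \<and> (y, z') \<in> snd ab}"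
      using coh[rule_format, OF m s p] .
  qed simp
qed

lemma scheme_eq:
  assumes s1: "is_scheme UNIV S1" and s2: "is_scheme UNIV S2"
    and eq: "scheme_relations S1 = scheme_relations S2"
  shows "S1 = S2"
proof -
  have key: "S \<subseteq> S'" if a: "is_scheme UNIV S" "is_scheme UNIV S'"
    and e: "scheme_relations S = scheme_relations S'" for S S' :: "('b \<times> 'b) set set"
  proof
    fix s assume sS: "s \<in> S"
    have d: "\<forall>s\<in>S. \<forall>t\<in>S. s \<noteq> t \<longrightarrow> s \<inter> t = {}" "\<forall>s\<in>S. s \<noteq> {}" "\<Union>S = UNIV"
      using is_schemeD(4,2,3)[OF a(1)] by simp_all
    have d': "\<forall>s\<in>S'. \<forall>t\<in>S'. s \<noteq> t \<longrightarrow> s \<inter> t = {}" "\<forall>s\<in>S'. s \<noteq> {}" "\<Union>S' = UNIV"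
      using is_schemeD(4,2,3)[OF a(2)] by simp_all
    have R: "scheme_relations S = {A. \<forall>s\<in>S. s \<subseteq> A \<or> s \<inter> A = {}}"
      "scheme_relations S' = {A. \<forall>s\<in>S'. s \<subseteq> A \<or> s \<inter> A = {}}"
      using scheme_rel[OF a(1)] scheme_rel[OF a(2)] by simp_all
    have "s \<noteq> {}" using d(2) sS by simp
    then obtain p where p: "p \<in> s" by blast
    have "p \<in> \<Union>S'" using d'(3) by simp
    then obtain t where t: "t \<in> S'" "p \<in> t" by blast
    have "s \<in> scheme_relations S" unfolding scheme_relations_def using sS
      by (intro CollectI exI[of _ "{s}"]) simp
    hence "s \<in> scheme_relations S'" using e by simp
    hence "\<forall>t\<in>S'. t \<subseteq> s \<or> t \<inter> s = {}" unfolding R(2) by simp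
    hence ts: "t \<subseteq> s" using p t by blast
    have "t \<in> scheme_relations S'" unfolding scheme_relations_def using t
      by (intro CollectI exI[of _ "{t}"]) simp
    hence "t \<in> scheme_relations S" using e by simp
    hence "\<forall>s'\<in>S. s' \<subseteq> t \<or> s' \<inter> t = {}" unfolding R(1) by simp
    hence "s \<subseteq> t \<or> s \<inter> t = {}" using sS by blast
    hence "s \<subseteq> t" using p t by blast
    hence "s = t" using ts by (rule subset_antisym)
    thus "s \<in> S'" using t by simp
  qed
  show ?thesis using key[OF s1 s2 eq] key[OF s2 s1 eq[symmetric]] by (rule subset_antisym)
qed

lemma gen_scheme_props:
  fixes S M :: "('a::finite \<times> 'a) set set"
  shows "is_scheme UNIV (gen_scheme UNIV S M) \<and> scheme_relations S \<subseteq> scheme_relations (gen_scheme UNIV S M)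
     \<and> M \<subseteq> scheme_relations (gen_scheme UNIV S M)"
proof -
  define Good where "Good = {S''. is_scheme UNIV S'' \<and> scheme_relations S \<subseteq> scheme_relations S'' \<and> M \<subseteq> scheme_relations S''}"
  define F where "F = {A. \<forall>S''\<in>Good. \<forall>s\<in>S''. s \<subseteq> A \<or> s \<inter> A = {}}"
  define at where "at p = \<Inter>{A\<in>F. p \<in> A}" for p
  define Ss where "Ss = range at"
  have GR: "scheme_relations S'' = {A. \<forall>s\<in>S''. s \<subseteq> A \<or> s \<inter> A = {}}" if "S'' \<in> Good" for S''
  proof -
    have "is_scheme UNIV S''" using that unfolding Good_def by simp
    thus ?thesis by (rule scheme_rel)
  qed
  have Gsch: "is_scheme UNIV S''" if "S'' \<in> Good" for S''
    using that unfolding Good_def by simp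
  have Fd: "s \<subseteq> A \<or> s \<inter> A = {}" if "A \<in> F" "S'' \<in> Good" "s \<in> S''" for A S'' s
    using that unfolding F_def by simp
  have FI: "A \<in> F" if "\<And>S'' s. S'' \<in> Good \<Longrightarrow> s \<in> S'' \<Longrightarrow> s \<subseteq> A \<or> s \<inter> A = {}" for A
    using that unfolding F_def by simp
  have F_Inter: "\<Inter>\<A> \<in> F" if A: "\<A> \<subseteq> F" for \<A>
  proof (rule FI)
    fix S'' s assume G: "S'' \<in> Good" "s \<in> S''"
    show "s \<subseteq> \<Inter>\<A> \<or> s \<inter> \<Inter>\<A> = {}"
    proof (cases "\<exists>A\<in>\<A>. s \<inter> A = {}")
      case True thus ?thesis by blast
    next
      case False
      hence "\<forall>A\<in>\<A>. s \<subseteq> A" using Fd[OF _ G] A by blast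
      thus ?thesis by blast
    qed
  qed
  have F_Union: "\<Union>\<A> \<in> F" if A: "\<A> \<subseteq> F" for \<A>
  proof (rule FI)
    fix S'' s assume G: "S'' \<in> Good" "s \<in> S''"
    show "s \<subseteq> \<Union>\<A> \<or> s \<inter> \<Union>\<A> = {}"
    proof (cases "\<exists>A\<in>\<A>. s \<subseteq> A")
      case True thus ?thesis by blast
    next
      case False
      hence "\<forall>A\<in>\<A>. s \<inter> A = {}" using Fd[OF _ G] A by blast
      thus ?thesis by blast
    qed
  qed
  have F_diff: "A - B \<in> F" if AB: "A \<in> F" "B \<in> F" for A B
  proof (rule FI)
    fix S'' s assume G: "S'' \<in> Good" "s \<in> S''"
    have "s \<subseteq> A \<or> s \<inter> A = {}" "s \<subseteq> B \<or> s \<inter> B = {}" using Fd[OF _ G] AB by auto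
    thus "s \<subseteq> A - B \<or> s \<inter> (A - B) = {}" by blast
  qed
  have F_conv: "A\<inverse> \<in> F" if "A \<in> F" for A
  proof (rule FI)
    fix S'' s assume G: "S'' \<in> Good" "s \<in> S''"
    have "s\<inverse> \<in> S''" using is_schemeD(5)[OF Gsch[OF G(1)]] G(2) by simp
    hence "s\<inverse> \<subseteq> A \<or> s\<inverse> \<inter> A = {}" using Fd[OF that G(1)] by simp
    thus "s \<subseteq> A\<inverse> \<or> s \<inter> A\<inverse> = {}" by auto
  qed
  have F_Id: "Id \<in> F"
  proof (rule FI)
    fix S'' s assume G: "S'' \<in> Good" "s \<in> S''"
    obtain T where T: "T \<subseteq> S''" "\<Union>T = Id" using is_schemeD(6)[OF Gsch[OF G(1)]] unfolding Id_on_UNIV_eq by blast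
    have d: "\<forall>s\<in>S''. \<forall>t\<in>S''. s \<noteq> t \<longrightarrow> s \<inter> t = {}" using is_schemeD(4)[OF Gsch[OF G(1)]] .
    show "s \<subseteq> Id \<or> s \<inter> Id = {}"
    proof (cases "s \<in> T")
      case True thus ?thesis using T by blast
    next
      case False
      have "s \<inter> t = {}" if "t \<in> T" for t
      proof -
        have "t \<in> S''" "s \<noteq> t" using T(1) that False by auto
        thus ?thesis using d G(2) by blast
      qed
      thus ?thesis using T(2) by blast
    qed
  qed
  have F_S: "scheme_relations S \<subseteq> F" and F_M: "M \<subseteq> F"
  proof -
    have "scheme_relations S \<subseteq> scheme_relations S''" "M \<subseteq> scheme_relations S''" if "S'' \<in> Good" for S''
      using that unfolding Good_def by simp_all
    thus "scheme_relations S \<subseteq> F" "M \<subseteq> F" unfolding F_def using GR by blast+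
  qed
  have F_sub: "F \<subseteq> scheme_relations S''" if "S'' \<in> Good" for S''
    using GR[OF that] that unfolding F_def by blast
  have F_level: "{(x,z). card {y. (x,y) \<in> A \<and> (y,z) \<in> B} = k} \<in> F" if AB: "A \<in> F" "B \<in> F" for A B k
  proof (rule FI)
    fix S'' s assume G: "S'' \<in> Good" "s \<in> S''"
    have sch: "is_scheme UNIV S''" using Gsch[OF G(1)] .
    have cov: "\<Union>S'' = UNIV" using is_schemeD(3)[OF sch] by simp
    have ex: "C = \<Union>{t\<in>S''. t \<subseteq> C}" if "C \<in> F" for C
    proof
      show "C \<subseteq> \<Union>{t\<in>S''. t \<subseteq> C}"
      proof
        fix p assume p: "p \<in> C"
        have "p \<in> \<Union>S''" using cov by simp
        then obtain t where t: "t \<in> S''" "p \<in> t" by blast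
        hence "t \<subseteq> C" using Fd[OF that G(1) t(1)] p by blast
        thus "p \<in> \<Union>{t\<in>S''. t \<subseteq> C}" using t by blast
      qed
    qed blast
    have ce: "card {y. (x,y) \<in> A \<and> (y,z) \<in> B} = card {y. (x',y) \<in> A \<and> (y,z') \<in> B}"
      if "(x,z) \<in> s" "(x',z') \<in> s" for x z x' z'
      using count_union_const[OF sch _ _ G(2) that, of "{t\<in>S''. t \<subseteq> A}" "{t\<in>S''. t \<subseteq> B}"]
        ex[OF AB(1)] ex[OF AB(2)] by simp
    show "s \<subseteq> {(x,z). card {y. (x,y) \<in> A \<and> (y,z) \<in> B} = k} \<or> s \<inter> {(x,z). card {y. (x,y) \<in> A \<and> (y,z) \<in> B} = k} = {}"
    proof (cases "s \<inter> {(x,z). card {y. (x,y) \<in> A \<and> (y,z) \<in> B} = k} = {}")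
      case False
      then obtain x z where xz: "(x,z) \<in> s" "card {y. (x,y) \<in> A \<and> (y,z) \<in> B} = k" by blast
      have "s \<subseteq> {(x,z). card {y. (x,y) \<in> A \<and> (y,z) \<in> B} = k}"
      proof
        fix p assume p: "p \<in> s"
        obtain x' z' where pp: "p = (x',z')" by force
        show "p \<in> {(x,z). card {y. (x,y) \<in> A \<and> (y,z) \<in> B} = k}"
          using ce[OF xz(1), of x' z'] p pp xz(2) by simp
      qed
      thus ?thesis by blast
    qed simp
  qed
  have at_F: "at p \<in> F" for p unfolding at_def by (rule F_Inter) blast
  have at_in: "p \<in> at p" for p unfolding at_def by blast
  have at_le: "at p \<subseteq> A" if "A \<in> F" "p \<in> A" for p A using that unfolding at_def by blast
  have at_eq: "at q = at p" if q: "q \<in> at p" for p q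
  proof -
    have qp: "at q \<subseteq> at p" using at_le[OF at_F q] .
    have "p \<in> at q"
    proof (rule ccontr)
      assume np: "p \<notin> at q"
      have "p \<in> at p - at q" using np at_in[of p] by blast
      hence "at p \<subseteq> at p - at q" using at_le[OF F_diff[OF at_F at_F]] by blast
      thus False using q at_in[of q] by blast
    qed
    hence "at p \<subseteq> at q" using at_le[OF at_F] by blast
    with qp show ?thesis by (rule subset_antisym)
  qed
  have RelSs: "scheme_relations Ss = F"
  proof
    show "scheme_relations Ss \<subseteq> F"
    proof
      fix A assume "A \<in> scheme_relations Ss"
      then obtain T where T: "T \<subseteq> Ss" "A = \<Union>T" unfolding scheme_relations_def by blast
      have "T \<subseteq> F" using T(1) at_F unfolding Ss_def by blast
      thus "A \<in> F" using F_Union T(2) by simp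
    qed
    show "F \<subseteq> scheme_relations Ss"
    proof
      fix A assume A: "A \<in> F"
      have "A = \<Union>(at ` A)"
      proof
        show "A \<subseteq> \<Union>(at ` A)" using at_in by blast
        show "\<Union>(at ` A) \<subseteq> A" using at_le[OF A] by blast
      qed
      moreover have "at ` A \<subseteq> Ss" unfolding Ss_def by blast
      ultimately show "A \<in> scheme_relations Ss" unfolding scheme_relations_def by blast
    qed
  qed
  have schSs: "is_scheme UNIV Ss"
    unfolding is_scheme_def
  proof (intro conjI)
    show "finite (UNIV :: 'a set)" by simp
    show "\<forall>s\<in>Ss. s \<noteq> {}" unfolding Ss_def using at_in by blast
    show "\<Union>Ss = UNIV \<times> UNIV"
    proof -
      have "p \<in> \<Union>Ss" for p using at_in[of p] unfolding Ss_def by blast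
      thus ?thesis by auto
    qed
    show "\<forall>s\<in>Ss. \<forall>t\<in>Ss. s \<noteq> t \<longrightarrow> s \<inter> t = {}"
    proof (intro ballI impI)
      fix s t assume st: "s \<in> Ss" "t \<in> Ss" "s \<noteq> t"
      obtain p q where pq: "s = at p" "t = at q" using st(1,2) unfolding Ss_def by blast
      show "s \<inter> t = {}"
      proof (rule ccontr)
        assume "s \<inter> t \<noteq> {}"
        then obtain w where w: "w \<in> at p" "w \<in> at q" using pq by blast
        have "at p = at q" using at_eq[OF w(1)] at_eq[OF w(2)] by simp
        thus False using st(3) pq by simp
      qed
    qed
    show "\<forall>s\<in>Ss. s\<inverse> \<in> Ss"
    proof
      fix s assume "s \<in> Ss"
      then obtain p where p: "s = at p" unfolding Ss_def by blast
      obtain a b where ab: "p = (a,b)" by force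
      have "at (b,a) = (at p)\<inverse>"
      proof
        have "(b,a) \<in> (at p)\<inverse>" using at_in[of p] ab by simp
        thus "at (b,a) \<subseteq> (at p)\<inverse>" using at_le[OF F_conv[OF at_F]] by blast
        have "p \<in> (at (b,a))\<inverse>" using at_in[of "(b,a)"] ab by simp
        hence "at p \<subseteq> (at (b,a))\<inverse>" using at_le[OF F_conv[OF at_F]] by blast
        thus "(at p)\<inverse> \<subseteq> at (b,a)" by blast
      qed
      thus "s\<inverse> \<in> Ss" using p unfolding Ss_def by (metis rangeI)
    qed
    show "\<exists>T\<subseteq>Ss. \<Union>T = Id_on UNIV"
    proof (intro exI conjI)
      show "at ` Id \<subseteq> Ss" unfolding Ss_def by blast
      have "\<Union>(at ` Id) = Id"
      proof
        show "\<Union>(at ` Id) \<subseteq> Id" using at_le[OF F_Id] by blast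
        show "Id \<subseteq> \<Union>(at ` Id)" using at_in by blast
      qed
      thus "\<Union>(at ` Id) = Id_on UNIV" unfolding Id_on_UNIV_eq .
    qed
    show "\<forall>r1\<in>Ss. \<forall>r2\<in>Ss. \<forall>s\<in>Ss. \<forall>x z x' z'. (x, z) \<in> s \<longrightarrow> (x', z') \<in> s \<longrightarrow>
        card {y. (x, y) \<in> r1 \<and> (y, z) \<in> r2} = card {y. (x', y) \<in> r1 \<and> (y, z') \<in> r2}"
    proof (intro ballI allI impI)
      fix r1 r2 s x z x' z' assume r: "r1 \<in> Ss" "r2 \<in> Ss" "s \<in> Ss" and xz: "(x, z) \<in> s" "(x', z') \<in> s"
      define k where "k = card {y. (x, y) \<in> r1 \<and> (y, z) \<in> r2}"
      define L where "L = {(x,z). card {y. (x,y) \<in> r1 \<and> (y,z) \<in> r2} = k}"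
      have r12: "r1 \<in> F" "r2 \<in> F" using r(1,2) at_F unfolding Ss_def by auto
      have LF: "L \<in> F" unfolding L_def by (rule F_level[OF r12])
      obtain p where p: "s = at p" using r(3) unfolding Ss_def by blast
      have "s = at (x,z)" using at_eq xz(1) p by metis
      moreover have "(x,z) \<in> L" unfolding L_def k_def by simp
      ultimately have "s \<subseteq> L" using at_le[OF LF] by simp
      hence "(x',z') \<in> L" using xz(2) by blast
      thus "card {y. (x, y) \<in> r1 \<and> (y, z) \<in> r2} = card {y. (x', y) \<in> r1 \<and> (y, z') \<in> r2}"
        unfolding L_def k_def by simp
    qed
  qed
  have PSs: "is_scheme UNIV Ss \<and> scheme_relations S \<subseteq> scheme_relations Ss \<and> M \<subseteq> scheme_relations Ss \<and>
      (\<forall>S''. is_scheme UNIV S'' \<and> scheme_relations S \<subseteq> scheme_relations S'' \<and>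
              M \<subseteq> scheme_relations S'' \<longrightarrow> scheme_relations Ss \<subseteq> scheme_relations S'')"
  proof (intro conjI allI impI)
    show "is_scheme UNIV Ss" by (rule schSs)
    show "scheme_relations S \<subseteq> scheme_relations Ss" using F_S RelSs by simp
    show "M \<subseteq> scheme_relations Ss" using F_M RelSs by simp
    fix S'' assume "is_scheme UNIV S'' \<and> scheme_relations S \<subseteq> scheme_relations S'' \<and> M \<subseteq> scheme_relations S''"
    hence "S'' \<in> Good" unfolding Good_def by simp
    thus "scheme_relations Ss \<subseteq> scheme_relations S''" using F_sub RelSs by simp
  qed
  have uniq: "S1 = Ss" if H: "is_scheme UNIV S1 \<and> scheme_relations S \<subseteq> scheme_relations S1 \<and> M \<subseteq> scheme_relations S1 \<and>
      (\<forall>S''. is_scheme UNIV S'' \<and> scheme_relations S \<subseteq> scheme_relations S'' \<and>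
              M \<subseteq> scheme_relations S'' \<longrightarrow> scheme_relations S1 \<subseteq> scheme_relations S'')" for S1
  proof (rule scheme_eq)
    show "is_scheme UNIV S1" using H by simp
    show "is_scheme UNIV Ss" by (rule schSs)
    have a: "scheme_relations S1 \<subseteq> scheme_relations Ss" using H PSs by blast
    have b: "scheme_relations Ss \<subseteq> scheme_relations S1" using H PSs by blast
    show "scheme_relations S1 = scheme_relations Ss" using a b by (rule subset_antisym)
  qed
  have "gen_scheme UNIV S M = Ss"
    unfolding gen_scheme_def
    apply (rule the_equality)
     apply (rule PSs)
    apply (erule uniq)
    done
  thus ?thesis using PSs by simp
qed

lemma relD:
  assumes "is_scheme UNIV S" "A \<in> scheme_relations S" "s \<in> S"
  shows "s \<subseteq> A \<or> s \<inter> A = {}"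
  using assms(2,3) unfolding scheme_rel[OF assms(1)] by simp

lemma relI:
  assumes "is_scheme UNIV S" "\<And>s. s \<in> S \<Longrightarrow> s \<subseteq> A \<or> s \<inter> A = {}"
  shows "A \<in> scheme_relations S"
  using assms(2) unfolding scheme_rel[OF assms(1)] by simp

lemma rel_Union:
  assumes sch: "is_scheme UNIV S" and A: "\<A> \<subseteq> scheme_relations S"
  shows "\<Union>\<A> \<in> scheme_relations S"
proof (rule relI[OF sch])
  fix s assume s: "s \<in> S"
  show "s \<subseteq> \<Union>\<A> \<or> s \<inter> \<Union>\<A> = {}"
  proof (cases "\<exists>A\<in>\<A>. s \<subseteq> A")
    case True thus ?thesis by blast
  next
    case False
    hence "\<forall>A\<in>\<A>. s \<inter> A = {}" using relD[OF sch _ s] A by blast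
    thus ?thesis by blast
  qed
qed

lemma rel_Int:
  assumes sch: "is_scheme UNIV S" and AB: "A \<in> scheme_relations S" "B \<in> scheme_relations S"
  shows "A \<inter> B \<in> scheme_relations S"
proof (rule relI[OF sch])
  fix s assume s: "s \<in> S"
  have "s \<subseteq> A \<or> s \<inter> A = {}" "s \<subseteq> B \<or> s \<inter> B = {}" using relD[OF sch _ s] AB by auto
  thus "s \<subseteq> A \<inter> B \<or> s \<inter> (A \<inter> B) = {}" by blast
qed

lemma rel_conv:
  assumes sch: "is_scheme UNIV S" and A: "A \<in> scheme_relations S"
  shows "A\<inverse> \<in> scheme_relations S"
proof (rule relI[OF sch])
  fix s assume s: "s \<in> S"
  have "s\<inverse> \<in> S" using s is_schemeD(5)[OF sch] by simp
  hence "s\<inverse> \<subseteq> A \<or> s\<inverse> \<inter> A = {}" using relD[OF sch A] by simp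
  thus "s \<subseteq> A\<inverse> \<or> s \<inter> A\<inverse> = {}" by auto
qed

lemma rel_single:
  assumes "s \<in> S" shows "s \<in> scheme_relations S"
  unfolding scheme_relations_def using assms by (intro CollectI exI[of _ "{s}"]) simp

lemma rel_comp:
  fixes S :: "('a::finite \<times> 'a) set set"
  assumes sch: "is_scheme UNIV S" and AB: "A \<in> scheme_relations S" "B \<in> scheme_relations S"
  shows "A O B \<in> scheme_relations S"
proof -
  have cov: "\<Union>S = UNIV" using is_schemeD(3)[OF sch] by simp
  have ex: "C = \<Union>{t\<in>S. t \<subseteq> C}" if C: "C \<in> scheme_relations S" for C
  proof
    show "C \<subseteq> \<Union>{t\<in>S. t \<subseteq> C}"
    proof
      fix p assume p: "p \<in> C"
      have "p \<in> \<Union>S" using cov by simp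
      then obtain t where t: "t \<in> S" "p \<in> t" by blast
      hence "t \<subseteq> C" using relD[OF sch C t(1)] p by blast
      thus "p \<in> \<Union>{t\<in>S. t \<subseteq> C}" using t by blast
    qed
  qed blast
  have mv: "(x',z') \<in> A O B" if s: "s \<in> S" and p: "(x,z) \<in> s" "(x',z') \<in> s" and xz: "(x,z) \<in> A O B"
    for s x z x' z'
  proof -
    have ce: "card {y. (x,y) \<in> A \<and> (y,z) \<in> B} = card {y. (x',y) \<in> A \<and> (y,z') \<in> B}"
      using count_union_const[OF sch _ _ s p, of "{t\<in>S. t \<subseteq> A}" "{t\<in>S. t \<subseteq> B}"] ex[OF AB(1)] ex[OF AB(2)] by simp
    obtain y where "(x,y) \<in> A" "(y,z) \<in> B" using xz by blast
    hence "{y. (x,y) \<in> A \<and> (y,z) \<in> B} \<noteq> {}" by blast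
    hence "card {y. (x,y) \<in> A \<and> (y,z) \<in> B} \<noteq> 0" by simp
    hence "card {y. (x',y) \<in> A \<and> (y,z') \<in> B} \<noteq> 0" using ce by simp
    hence "{y. (x',y) \<in> A \<and> (y,z') \<in> B} \<noteq> {}" by (metis card.empty)
    then obtain y' where "(x',y') \<in> A" "(y',z') \<in> B" by blast
    thus ?thesis by (rule relcompI)
  qed
  show ?thesis
  proof (rule relI[OF sch])
    fix s assume s: "s \<in> S"
    show "s \<subseteq> A O B \<or> s \<inter> (A O B) = {}"
    proof (cases "s \<inter> (A O B) = {}")
      case False
      then obtain x z where xz: "(x,z) \<in> s" "(x,z) \<in> A O B" by auto
      have "s \<subseteq> A O B"
      proof
        fix p assume p: "p \<in> s"
        obtain x' z' where pp: "p = (x',z')" by force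
        show "p \<in> A O B" using mv[OF s xz(1) _ xz(2), of x' z'] p pp by simp
      qed
      thus ?thesis by blast
    qed simp
  qed
qed

lemma invariant_units:
  fixes A :: "('a::comm_ring_1 \<times> 'a) set"
  shows "invariant_rel ((\<lambda>a. \<lambda>x. x * a) ` units_of_ring) A \<longleftrightarrow>
    (\<forall>a. a dvd 1 \<longrightarrow> (\<forall>x y. (x,y)\<in>A \<longrightarrow> (x*a, y*a) \<in> A))"
proof
  assume inv: "invariant_rel ((\<lambda>a. \<lambda>x. x * a) ` units_of_ring) A"
  show "\<forall>a. a dvd 1 \<longrightarrow> (\<forall>x y. (x,y)\<in>A \<longrightarrow> (x*a, y*a) \<in> A)"
  proof (intro allI impI)
    fix a x y assume a: "a dvd (1::'a)" and xy: "(x,y) \<in> A"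
    have "a \<in> units_of_ring" using a unfolding units_of_ring_def by simp
    hence "(\<lambda>(x, y). (x * a, y * a)) ` A = A" using inv unfolding invariant_rel_def by simp
    moreover have "(x*a, y*a) \<in> (\<lambda>(x, y). (x * a, y * a)) ` A" using xy by force
    ultimately show "(x*a, y*a) \<in> A" by simp
  qed
next
  assume cl: "\<forall>a. a dvd 1 \<longrightarrow> (\<forall>x y. (x,y)\<in>A \<longrightarrow> (x*a, y*a) \<in> A)"
  show "invariant_rel ((\<lambda>a. \<lambda>x. x * a) ` units_of_ring) A"
    unfolding invariant_rel_def
  proof
    fix g :: "'a \<Rightarrow> 'a" assume "g \<in> (\<lambda>a. \<lambda>x. x * a) ` units_of_ring"
    then obtain a where a: "a dvd 1" and g: "g = (\<lambda>x. x * a)" unfolding units_of_ring_def by auto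
    obtain b where b: "1 = a * b" using a by (auto elim: dvdE)
    have bu: "b dvd 1" using b by (metis dvd_triv_right)
    show "(\<lambda>(x, y). (g x, g y)) ` A = A"
    proof
      show "(\<lambda>(x, y). (g x, g y)) ` A \<subseteq> A" using cl a g by auto
      show "A \<subseteq> (\<lambda>(x, y). (g x, g y)) ` A"
      proof
        fix p assume p: "p \<in> A"
        obtain x y where xy: "p = (x,y)" by force
        have "(x*b, y*b) \<in> A" using cl bu p xy by auto
        moreover have "(x*b*a, y*b*a) = (x,y)" proof -
          have "b * a = 1" using b by (simp add: mult.commute)
          thus ?thesis by (simp add: mult.assoc)
        qed
        ultimately show "p \<in> (\<lambda>(x, y). (g x, g y)) ` A" using xy g by (metis (no_types, lifting) case_prod_conv image_eqI)
      qed
    qed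
  qed
qed


lemma restr_char:
  fixes S0 :: "('a \<times> 'a) set set"
  assumes sch: "is_scheme UNIV S0"
  shows "scheme_relations (restrict_scheme U S0) =
    {A. A \<subseteq> U \<times> U \<and> (\<forall>t\<in>restrict_scheme U S0. t \<subseteq> A \<or> t \<inter> A = {})}"
proof (rule rel_char)
  have d: "\<forall>s\<in>S0. \<forall>t\<in>S0. s \<noteq> t \<longrightarrow> s \<inter> t = {}" using is_schemeD(4)[OF sch] .
  show "\<forall>s\<in>restrict_scheme U S0. \<forall>t\<in>restrict_scheme U S0. s \<noteq> t \<longrightarrow> s \<inter> t = {}"
  proof (intro ballI impI)
    fix s t assume s: "s \<in> restrict_scheme U S0" and t: "t \<in> restrict_scheme U S0" and ne: "s \<noteq> t"
    obtain s0 where s0: "s = s0 \<inter> (U \<times> U)" "s0 \<in> S0" using s unfolding restrict_scheme_def by blast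
    obtain t0 where t0: "t = t0 \<inter> (U \<times> U)" "t0 \<in> S0" using t unfolding restrict_scheme_def by blast
    have "s0 \<noteq> t0" using ne s0 t0 by blast
    hence "s0 \<inter> t0 = {}" using d s0(2) t0(2) by blast
    thus "s \<inter> t = {}" using s0(1) t0(1) by blast
  qed
  show "\<Union>(restrict_scheme U S0) = U \<times> U"
  proof
    show "\<Union>(restrict_scheme U S0) \<subseteq> U \<times> U" unfolding restrict_scheme_def by blast
    show "U \<times> U \<subseteq> \<Union>(restrict_scheme U S0)"
    proof
      fix p assume p: "p \<in> U \<times> U"
      have "p \<in> \<Union>S0" using is_schemeD(3)[OF sch] by simp
      then obtain s where s: "s \<in> S0" "p \<in> s" by blast
      have "s \<inter> (U \<times> U) \<in> restrict_scheme U S0" unfolding restrict_scheme_def using s p by blast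
      thus "p \<in> \<Union>(restrict_scheme U S0)" using s p by blast
    qed
  qed
qed

lemma restr_rel:
  fixes S0 :: "('a \<times> 'a) set set"
  assumes sch: "is_scheme UNIV S0" and A: "A \<in> scheme_relations S0" "A \<subseteq> U \<times> U"
  shows "A \<in> scheme_relations (restrict_scheme U S0)"
  unfolding restr_char[OF sch]
proof (intro CollectI conjI ballI)
  show "A \<subseteq> U \<times> U" by (rule A(2))
  fix t assume t: "t \<in> restrict_scheme U S0"
  obtain s0 where s0: "t = s0 \<inter> (U \<times> U)" "s0 \<in> S0" using t unfolding restrict_scheme_def by blast
  have "s0 \<subseteq> A \<or> s0 \<inter> A = {}" by (rule relD[OF sch A(1) s0(2)])
  thus "t \<subseteq> A \<or> t \<inter> A = {}" using s0(1) by blast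
qed

lemma unit_mult:
  fixes a b :: "'a::comm_ring_1"
  assumes "a dvd 1" "b dvd 1" shows "a * b dvd 1"
  using mult_dvd_mono[OF assms] by simp

lemma unit_inv:
  fixes a :: "'a::comm_ring_1"
  assumes "a dvd 1"
  obtains b where "a * b = 1" "b dvd 1"
proof -
  obtain b where b: "1 = a * b" using assms by (auto elim: dvdE)
  have "b dvd 1" using b by (metis dvd_triv_right)
  thus ?thesis using that b by simp
qed

lemma point_ext_props:
  fixes K :: "'a::{comm_ring_1,finite} set"
  shows "is_scheme UNIV (point_ext UNIV (Cyc K) 0)"
    "c \<in> Cyc K \<Longrightarrow> c \<in> scheme_relations (point_ext UNIV (Cyc K) 0)"
    "{(0,0)} \<in> scheme_relations (point_ext UNIV (Cyc K) 0)"
proof -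
  have G: "is_scheme UNIV (gen_scheme UNIV (Cyc K) {{(0::'a, 0)}}) \<and>
      scheme_relations (Cyc K) \<subseteq> scheme_relations (gen_scheme UNIV (Cyc K) {{(0::'a, 0)}}) \<and>
      {{(0::'a, 0)}} \<subseteq> scheme_relations (gen_scheme UNIV (Cyc K) {{(0::'a, 0)}})"
    by (rule gen_scheme_props)
  show "is_scheme UNIV (point_ext UNIV (Cyc K) 0)" using G unfolding point_ext_def by simp
  show "{(0,0)} \<in> scheme_relations (point_ext UNIV (Cyc K) 0)" using G unfolding point_ext_def by simp
  assume "c \<in> Cyc K"
  hence "c \<in> scheme_relations (Cyc K)" by (rule rel_single)
  thus "c \<in> scheme_relations (point_ext UNIV (Cyc K) 0)" using G unfolding point_ext_def by blast
qed

lemma basic_union: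
  fixes K :: "'a::{comm_ring_1,finite} set" and Y :: "'a set"
  assumes Y: "Y \<subseteq> units_of_ring"
    and rel: "Rrel Y \<in> scheme_relations (restrict_scheme units_of_ring (point_ext UNIV (Cyc K) 0))"
  shows "Y \<in> sring_unions (mult_sring_basic K)"
proof -
  define U where "U = (units_of_ring :: 'a set)"
  define S1 where "S1 = restrict_scheme U (point_ext UNIV (Cyc K) 0)"
  have sch0: "is_scheme UNIV (point_ext UNIV (Cyc K) 0)" by (rule point_ext_props(1))
  have R1: "scheme_relations S1 = {A. A \<subseteq> U \<times> U \<and> (\<forall>t\<in>S1. t \<subseteq> A \<or> t \<inter> A = {})}"
    unfolding S1_def by (rule restr_char[OF sch0])
  define Inv where "Inv A \<longleftrightarrow> (\<forall>a. a dvd 1 \<longrightarrow> (\<forall>x y. (x,y)\<in>A \<longrightarrow> (x*a,y*a)\<in>A))" for A :: "('a\<times>'a) set"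
  have Uiff: "x \<in> U \<longleftrightarrow> x dvd 1" for x unfolding U_def units_of_ring_def by simp
  have InvRrel: "Inv (Rrel X)" for X
    unfolding Inv_def
  proof (intro allI impI)
    fix a x y assume a: "a dvd (1::'a)" and xy: "(x,y) \<in> Rrel X"
    obtain g z where gz: "x = g" "y = z * g" "g dvd 1" "z \<in> X" using xy unfolding Rrel_def units_of_ring_def by blast
    have "g * a dvd 1" using gz(3) a by (rule unit_mult)
    moreover have "y * a = z * (g * a)" using gz by (simp add: mult.assoc)
    ultimately show "(x*a, y*a) \<in> Rrel X" unfolding Rrel_def units_of_ring_def using gz by blast
  qed
  have RrelU: "Rrel X \<subseteq> U \<times> U" if "X \<subseteq> U" for X
  proof
    fix p assume "p \<in> Rrel X"
    then obtain g z where gz: "p = (g, z * g)" "g dvd 1" "z \<in> X" unfolding Rrel_def units_of_ring_def by blast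
    have "z dvd 1" using gz(3) that Uiff by blast
    hence "z * g dvd 1" using gz(2) by (rule unit_mult)
    thus "p \<in> U \<times> U" using gz Uiff by simp
  qed
  have main: "\<exists>X\<in>mult_sring_basic K. y \<in> X \<and> X \<subseteq> Y" if y: "y \<in> Y" for y
  proof -
    define Fam where "Fam = {A \<in> scheme_relations S1. Inv A \<and> (1,y) \<in> A}"
    define m where "m = \<Inter>Fam"
    have RY: "Rrel Y \<in> Fam"
    proof -
      have "Rrel Y \<in> scheme_relations S1" using rel unfolding S1_def U_def .
      moreover have "(1,y) \<in> Rrel Y" unfolding Rrel_def units_of_ring_def using y by force
      ultimately show ?thesis unfolding Fam_def using InvRrel by simp
    qed
    have m_sub: "m \<subseteq> Rrel Y" unfolding m_def using RY by blast
    have mU: "m \<subseteq> U \<times> U" using m_sub RrelU[of Y] Y unfolding U_def by blast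
    have FamD: "A \<in> scheme_relations S1" "Inv A" "(1,y) \<in> A" if "A \<in> Fam" for A
      using that unfolding Fam_def by auto
    have m_rel: "m \<in> scheme_relations S1"
      unfolding R1
    proof (intro CollectI conjI ballI)
      show "m \<subseteq> U \<times> U" by (rule mU)
      fix t assume t: "t \<in> S1"
      show "t \<subseteq> m \<or> t \<inter> m = {}"
      proof (cases "\<exists>A\<in>Fam. t \<inter> A = {}")
        case True thus ?thesis unfolding m_def by blast
      next
        case False
        have "\<forall>A\<in>Fam. t \<subseteq> A"
        proof
          fix A assume A: "A \<in> Fam"
          have "t \<subseteq> A \<or> t \<inter> A = {}" using FamD(1)[OF A] t unfolding R1 by blast
          thus "t \<subseteq> A" using False A by blast
        qed
        thus ?thesis unfolding m_def by blast
      qed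
    qed
    have m_inv: "Inv m"
      unfolding Inv_def
    proof (intro allI impI)
      fix a x z assume a: "a dvd (1::'a)" and xz: "(x,z) \<in> m"
      have "(x*a, z*a) \<in> A" if A: "A \<in> Fam" for A
      proof -
        have "(x,z) \<in> A" using xz A unfolding m_def by blast
        thus ?thesis using FamD(2)[OF A] a unfolding Inv_def by blast
      qed
      thus "(x*a, z*a) \<in> m" unfolding m_def by blast
    qed
    have m_in: "(1,y) \<in> m" unfolding m_def using FamD(3) by blast
    have m_min: "r' = m" if r': "r' \<in> scheme_relations S1" "Inv r'" "r' \<noteq> {}" "r' \<subseteq> m" for r'
    proof (cases "(1,y) \<in> r'")
      case True
      hence "r' \<in> Fam" unfolding Fam_def using r' by simp
      hence "m \<subseteq> r'" unfolding m_def by blast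
      thus ?thesis using r'(4) by blast
    next
      case False
      have "m - r' \<in> scheme_relations S1"
        unfolding R1
      proof (intro CollectI conjI ballI)
        show "m - r' \<subseteq> U \<times> U" using mU by blast
        fix t assume t: "t \<in> S1"
        have "t \<subseteq> m \<or> t \<inter> m = {}" using m_rel t unfolding R1 by blast
        moreover have "t \<subseteq> r' \<or> t \<inter> r' = {}" using r'(1) t unfolding R1 by blast
        ultimately show "t \<subseteq> m - r' \<or> t \<inter> (m - r') = {}" by blast
      qed
      moreover have "Inv (m - r')"
        unfolding Inv_def
      proof (intro allI impI)
        fix a x z assume a: "a dvd (1::'a)" and xz: "(x,z) \<in> m - r'"
        obtain b where b: "a * b = 1" "b dvd 1" using unit_inv[OF a] by blast
        have "(x*a, z*a) \<in> m" using m_inv a xz unfolding Inv_def by blast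
        moreover have "(x*a, z*a) \<notin> r'"
        proof
          assume "(x*a, z*a) \<in> r'"
          hence "(x*a*b, z*a*b) \<in> r'" using r'(2) b(2) unfolding Inv_def by blast
          hence "(x, z) \<in> r'" using b(1) by (simp add: mult.assoc)
          thus False using xz by blast
        qed
        ultimately show "(x*a, z*a) \<in> m - r'" by blast
      qed
      moreover have "(1,y) \<in> m - r'" using m_in False by blast
      ultimately have "m - r' \<in> Fam" unfolding Fam_def by simp
      hence "m \<subseteq> m - r'" unfolding m_def by blast
      hence "r' = {}" using r'(4) by blast
      thus ?thesis using r'(3) by simp
    qed
    define X where "X = {z. (1,z) \<in> m}"
    have mX: "Rrel X = m"
    proof
      show "Rrel X \<subseteq> m"
      proof
        fix p assume "p \<in> Rrel X"
        then obtain g z where gz: "p = (g, z * g)" "g dvd 1" "z \<in> X" unfolding Rrel_def units_of_ring_def by blast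
        have "(1*g, z*g) \<in> m" using m_inv gz(2,3) unfolding Inv_def X_def by blast
        thus "p \<in> m" using gz(1) by simp
      qed
      show "m \<subseteq> Rrel X"
      proof
        fix p assume p: "p \<in> m"
        obtain g z where gz: "p = (g,z)" by force
        have gu: "g dvd 1" using mU p gz Uiff by blast
        obtain b where b: "g * b = 1" "b dvd 1" using unit_inv[OF gu] by blast
        have "(g*b, z*b) \<in> m" using m_inv b(2) p gz unfolding Inv_def by blast
        hence zb: "z * b \<in> X" unfolding X_def using b(1) by simp
        have "(z * b) * g = z * (g * b)" by (simp add: ac_simps)
        hence "z = (z * b) * g" using b(1) by simp
        thus "p \<in> Rrel X" unfolding Rrel_def units_of_ring_def using gz gu zb by blast
      qed
    qed
    have XU: "X \<subseteq> U"
    proof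
      fix z assume "z \<in> X"
      hence "(1,z) \<in> m" unfolding X_def by simp
      thus "z \<in> U" using mU by blast
    qed
    have yX: "y \<in> X" unfolding X_def using m_in by simp
    have XY: "X \<subseteq> Y"
    proof
      fix z assume "z \<in> X"
      hence "(1,z) \<in> Rrel Y" unfolding X_def using m_sub by blast
      then obtain g x where "(1,z) = (g, x * g)" "x \<in> Y" unfolding Rrel_def by blast
      thus "z \<in> Y" by simp
    qed
    have "X \<in> mult_sring_basic K"
      unfolding mult_sring_basic_def C_prime_def fixed_scheme_def
    proof (intro CollectI conjI allI impI)
      show "X \<subseteq> units_of_ring" using XU unfolding U_def .
      show "Rrel X \<in> scheme_relations (restrict_scheme units_of_ring (point_ext UNIV (Cyc K) 0))"
        using m_rel mX unfolding S1_def U_def by simp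
      show "invariant_rel ((\<lambda>a x. x * a) ` units_of_ring) (Rrel X)"
        unfolding invariant_units using InvRrel[of X] unfolding Inv_def .
      show "Rrel X \<noteq> {}" using mX m_in by blast
      fix r' assume H: "r' \<in> scheme_relations (restrict_scheme units_of_ring (point_ext UNIV (Cyc K) 0)) \<and>
          invariant_rel ((\<lambda>a x. x * a) ` units_of_ring) r' \<and> r' \<noteq> {} \<and> r' \<subseteq> Rrel X"
      have "Inv r'" using H unfolding invariant_units Inv_def by blast
      moreover have "r' \<in> scheme_relations S1" using H unfolding S1_def U_def by blast
      ultimately show "r' = Rrel X" using m_min H mX by blast
    qed
    thus ?thesis using yX XY by blast
  qed
  have "Y = \<Union>{X \<in> mult_sring_basic K. X \<subseteq> Y}"
  proof
    show "Y \<subseteq> \<Union>{X \<in> mult_sring_basic K. X \<subseteq> Y}" using main by blast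
  qed blast
  thus ?thesis unfolding sring_unions_def by blast
qed


lemma Rrel_U:
  fixes X :: "'a::comm_ring_1 set"
  assumes "X \<subseteq> units_of_ring"
  shows "Rrel X \<subseteq> units_of_ring \<times> units_of_ring"
proof
  fix p assume "p \<in> Rrel X"
  then obtain g z where gz: "p = (g, z * g)" "g dvd 1" "z \<in> X" unfolding Rrel_def units_of_ring_def by blast
  have "z dvd 1" using gz(3) assms unfolding units_of_ring_def by blast
  hence "z * g dvd 1" using gz(2) by (rule unit_mult)
  thus "p \<in> units_of_ring \<times> units_of_ring" using gz unfolding units_of_ring_def by simp
qed

theorem theorem4p2:
  fixes K :: "'a::{comm_ring_1,finite} set"
  assumes "is_unit_subgroup K"
  shows "(\<forall>r\<in>units_of_ring. (\<lambda>k. r * k) ` K \<in> sring_unions (mult_sring_basic K)) \<and>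
         (\<forall>r::'a. ((\<lambda>k. 1 + r * k) ` K) \<inter> units_of_ring \<in> sring_unions (mult_sring_basic K))"
proof -
  define S0 where "S0 = point_ext UNIV (Cyc K) (0::'a)"
  have sch: "is_scheme UNIV S0" unfolding S0_def by (rule point_ext_props(1))
  have KU: "K \<subseteq> units_of_ring" "1 \<in> K" "\<forall>a\<in>K. \<forall>b\<in>K. a*b \<in> K" "\<forall>a\<in>K. \<exists>b\<in>K. a*b = 1"
    using assms unfolding is_unit_subgroup_def by auto
  have Kunit: "k dvd 1" if "k \<in> K" for k using KU(1) that unfolding units_of_ring_def by auto
  have Kmul: "a * b \<in> K" if "a \<in> K" "b \<in> K" for a b using KU(3) that by blast
  have Uiff: "x \<in> units_of_ring \<longleftrightarrow> x dvd 1" for x :: 'a unfolding units_of_ring_def by simp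
  define Rs where "Rs s = {(x,y). y - x \<in> (\<lambda>k. s*k) ` K}" for s :: 'a
  have Rs_rel: "Rs s \<in> scheme_relations S0" for s
  proof -
    have "Rs s \<in> Cyc K" unfolding Rs_def Cyc_def by blast
    thus ?thesis unfolding S0_def by (rule point_ext_props(2))
  qed
  have P0: "{(0,0)} \<in> scheme_relations S0" unfolding S0_def by (rule point_ext_props(3))
  define D where "D a b = (\<lambda>k. a*k)`K \<times> (\<lambda>k. b*k)`K" for a b :: 'a
  have D_eq: "D a b = (Rs a)\<inverse> O {(0,0)} O Rs b" for a b
  proof (rule set_eqI)
    fix p :: "'a \<times> 'a"
    obtain x y where p: "p = (x,y)" by force
    have "p \<in> D a b \<longleftrightarrow> (x,0) \<in> (Rs a)\<inverse> \<and> (0,y) \<in> Rs b" unfolding D_def Rs_def p by simp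
    also have "\<dots> \<longleftrightarrow> p \<in> (Rs a)\<inverse> O {(0,0)} O Rs b" unfolding p by blast
    finally show "p \<in> D a b \<longleftrightarrow> p \<in> (Rs a)\<inverse> O {(0,0)} O Rs b" .
  qed
  have D_rel: "D a b \<in> scheme_relations S0" for a b
    unfolding D_eq by (intro rel_comp[OF sch] rel_conv[OF sch] Rs_rel P0)
  have part1: "(\<lambda>k. r * k) ` K \<in> sring_unions (mult_sring_basic K)" if r: "r dvd 1" for r
  proof -
    define Y where "Y = (\<lambda>k. r * k) ` K"
    have YU: "Y \<subseteq> units_of_ring" unfolding Y_def using r Kunit unit_mult Uiff by blast
    have eq: "Rrel Y = \<Union>{D a (r*a) | a. a dvd 1}"
    proof
      show "Rrel Y \<subseteq> \<Union>{D a (r*a) | a. a dvd 1}"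
      proof
        fix p assume "p \<in> Rrel Y"
        then obtain g x where gx: "p = (g, x * g)" "g dvd 1" "x \<in> Y" unfolding Rrel_def units_of_ring_def by blast
        obtain k where k: "k \<in> K" "x = r * k" using gx(3) unfolding Y_def by blast
        have "g = g * 1" by simp
        hence "g \<in> (\<lambda>k. g*k)`K" using KU(2) by blast
        moreover have "x * g = (r * g) * k" using k(2) by (simp add: ac_simps)
        hence "x * g \<in> (\<lambda>k. (r*g)*k)`K" using k(1) by blast
        ultimately have "p \<in> D g (r*g)" unfolding D_def gx(1) by blast
        thus "p \<in> \<Union>{D a (r*a) | a. a dvd 1}" using gx(2) by blast
      qed
      show "\<Union>{D a (r*a) | a. a dvd 1} \<subseteq> Rrel Y"
      proof
        fix p assume "p \<in> \<Union>{D a (r*a) | a. a dvd 1}"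
        then obtain a where a: "a dvd 1" "p \<in> D a (r*a)" by blast
        then obtain k1 k2 where kk: "k1 \<in> K" "k2 \<in> K" "p = (a*k1, r*a*k2)" unfolding D_def by blast
        obtain k1' where k1': "k1' \<in> K" "k1 * k1' = 1" using KU(4) kk(1) by blast
        have gu: "a * k1 dvd 1" using a(1) Kunit[OF kk(1)] by (rule unit_mult)
        have xY: "r * (k2 * k1') \<in> Y" unfolding Y_def using Kmul[OF kk(2) k1'(1)] by blast
        have "r * (k2 * k1') * (a * k1) = r * a * k2 * (k1 * k1')" by (simp add: ac_simps)
        hence e: "r * a * k2 = r * (k2 * k1') * (a * k1)" using k1'(2) by simp
        show "p \<in> Rrel Y" unfolding Rrel_def units_of_ring_def kk(3) e using gu xY by blast
      qed
    qed
    have "Rrel Y \<in> scheme_relations S0" unfolding eq by (rule rel_Union[OF sch]) (use D_rel in blast)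
    hence "Rrel Y \<in> scheme_relations (restrict_scheme units_of_ring S0)"
      using restr_rel[OF sch _ Rrel_U[OF YU]] by blast
    hence "Y \<in> sring_unions (mult_sring_basic K)" using basic_union[OF YU] unfolding S0_def by blast
    thus ?thesis unfolding Y_def .
  qed
  have part2: "(\<lambda>k. 1 + r * k) ` K \<inter> units_of_ring \<in> sring_unions (mult_sring_basic K)" for r
  proof -
    define Y where "Y = (\<lambda>k. 1 + r * k) ` K \<inter> units_of_ring"
    have YU: "Y \<subseteq> units_of_ring" unfolding Y_def by blast
    have eq: "Rrel Y = \<Union>{D a b \<inter> Rs (r*a) | a b. a dvd 1 \<and> b dvd 1}"
    proof
      show "Rrel Y \<subseteq> \<Union>{D a b \<inter> Rs (r*a) | a b. a dvd 1 \<and> b dvd 1}"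
      proof
        fix p assume "p \<in> Rrel Y"
        then obtain g x where gx: "p = (g, x * g)" "g dvd 1" "x \<in> Y" unfolding Rrel_def units_of_ring_def by blast
        obtain k where k: "k \<in> K" "x = 1 + r * k" "x dvd 1" using gx(3) unfolding Y_def units_of_ring_def by blast
        have "g = g * 1" by simp
        hence "g \<in> (\<lambda>k. g*k)`K" using KU(2) by blast
        moreover have "x * g = (x * g) * 1" by simp
        hence "x * g \<in> (\<lambda>k. (x*g)*k)`K" using KU(2) by blast
        ultimately have "p \<in> D g (x*g)" unfolding D_def gx(1) by blast
        moreover have "x * g - g = (r * g) * k" using k(2) by (simp add: algebra_simps)
        hence "p \<in> Rs (r*g)" unfolding Rs_def gx(1) using k(1) by blast
        moreover have "x * g dvd 1" using k(3) gx(2) by (rule unit_mult)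
        ultimately show "p \<in> \<Union>{D a b \<inter> Rs (r*a) | a b. a dvd 1 \<and> b dvd 1}" using gx(2) by blast
      qed
      show "\<Union>{D a b \<inter> Rs (r*a) | a b. a dvd 1 \<and> b dvd 1} \<subseteq> Rrel Y"
      proof
        fix p assume "p \<in> \<Union>{D a b \<inter> Rs (r*a) | a b. a dvd 1 \<and> b dvd 1}"
        then obtain a b where ab: "a dvd 1" "b dvd 1" "p \<in> D a b" "p \<in> Rs (r*a)" by blast
        then obtain k1 k2 where kk: "k1 \<in> K" "k2 \<in> K" "p = (a*k1, b*k2)" unfolding D_def by blast
        obtain k3 where k3: "k3 \<in> K" "b*k2 - a*k1 = r*a*k3" using ab(4) kk(3) unfolding Rs_def by auto
        obtain k1' where k1': "k1' \<in> K" "k1 * k1' = 1" using KU(4) kk(1) by blast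
        obtain a' where a': "a * a' = 1" "a' dvd 1" using unit_inv[OF ab(1)] by blast
        have gu: "a * k1 dvd 1" using ab(1) Kunit[OF kk(1)] by (rule unit_mult)
        have zu: "b * k2 dvd 1" using ab(2) Kunit[OF kk(2)] by (rule unit_mult)
        have yu: "a' * k1' dvd 1" using a'(2) Kunit[OF k1'(1)] by (rule unit_mult)
        define x where "x = b * k2 * (a' * k1')"
        have xu: "x dvd 1" unfolding x_def using zu yu by (rule unit_mult)
        have z: "b * k2 = a * k1 + r * a * k3" using k3(2) by (simp add: algebra_simps)
        have "x = (a * k1 + r * a * k3) * (a' * k1')" unfolding x_def z ..
        also have "\<dots> = (a * a') * (k1 * k1') + r * (k3 * k1') * (a * a')" by (simp add: algebra_simps)
        also have "\<dots> = 1 + r * (k3 * k1')" using a'(1) k1'(2) by simp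
        finally have x1: "x = 1 + r * (k3 * k1')" .
        have xY: "x \<in> Y" unfolding Y_def units_of_ring_def using x1 xu Kmul[OF k3(1) k1'(1)] by blast
        have "x * (a * k1) = b * k2 * ((a * a') * (k1 * k1'))" unfolding x_def by (simp add: ac_simps)
        hence e: "b * k2 = x * (a * k1)" using a'(1) k1'(2) by simp
        show "p \<in> Rrel Y" unfolding Rrel_def units_of_ring_def kk(3) e using gu xY by blast
      qed
    qed
    have "Rrel Y \<in> scheme_relations S0" unfolding eq
      by (rule rel_Union[OF sch]) (use D_rel Rs_rel rel_Int[OF sch] in blast)
    hence "Rrel Y \<in> scheme_relations (restrict_scheme units_of_ring S0)"
      using restr_rel[OF sch _ Rrel_U[OF YU]] by blast
    hence "Y \<in> sring_unions (mult_sring_basic K)" using basic_union[OF YU] unfolding S0_def by blast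
    thus ?thesis unfolding Y_def .
  qed
  show ?thesis using part1 part2 unfolding units_of_ring_def by blast
qed

thm_deps theorem4p2

end
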